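(* In the setting described in the context, suppose that $(\mathrm{Id}_V\otimes Y)(Y\otimes \mathrm{Id}_V)w-qw\in\Upsilon^{(3)}$ for all $w\in V\otimes I_2$. Then for all $x,y\in V$ the following identity holds in $\bigwedge^2V^*$: $$\ell_{xy}\wedge\ell'_{xy}=\ell_{xx}\wedge\ell'_{yy}.$$
   Context: Let $V$ be a $3$-dimensional vector space over a field $k$ and $\zeta\in GL(V)$. Write $xy$ for $x\otimes y$ in the tensor algebra $T(V)$. Put $x\barwedge y=\zeta(x)y-\zeta(y)x\in V^{\otimes 2}$ and $x\barwedge y\barwedge z=\zeta^2(x)\zeta(y)z+\zeta^2(y)\zeta(z)x+\zeta^2(z)\zeta(x)y-\zeta^2(x)\zeta(z)y-\zeta^2(y)\zeta(x)z-\zeta^2(z)\zeta(y)x\in V^{\otimes3}$. Let $I$ be the two-sided ideal of $T(V)$ generated by all $x\barwedge y$, $A=T(V)/I$, $I_2=I\cap V^{\otimes 2}$ (spanned by the $x\barwedge y$), and $\Upsilon^{(3)}=(I_2\otimes V)\cap(V\otimes I_2)$, the one-dimensional space spanned by the $x\barwedge y\barwedge z$. The maps $x\wedge y\mapsto x\barwedge y$ and $x\wedge y\wedge z\mapsto x\barwedge y\barwedge z$ are linear isomorphisms $\bigwedge^2V\cong I_2$, $\bigwedge^3V\cong\Upsilon^{(3)}$; transporting the exterior product, for $x\in V$ and $w\in I_2$ one gets $x\barwedge w\in\Upsilon^{(3)}$, bilinear, with $x\barwedge(y\barwedge z)=x\barwedge y\barwedge z$. Let $R$ be a Hecke symmetry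 on $V$ with parameter $q\ne0$ (i.e. $R$ satisfies the braid equation $(R\otimes\mathrm{Id})(\mathrm{Id}\otimes R)(R\otimes\mathrm{Id})=(\mathrm{Id}\otimes R)(R\otimes\mathrm{Id})(\mathrm{Id}\otimes R)$ and $(R-q\,\mathrm{Id})(R+\mathrm{Id})=0$) such that $\mathbb{S}(V,R)=A$, i.e. $\mathrm{Im}(R-q\,\mathrm{Id}_{V\otimes V})=I_2$. Put $R'=(\zeta^{-1}\otimes\zeta^{-1})R(\zeta\otimes\zeta)$, $Y=q\,\mathrm{Id}-R$, $Y'=q\,\mathrm{Id}-R'$. Fix a nonzero alternating trilinear form $\omega$ on $V$ and let $\tilde\omega:\Upsilon^{(3)}\to k$ be the linear map with $\tilde\omega(x\barwedge y\barwedge z)=\omega(x,y,z)$. Define linear forms $\ell_{xy},\ell'_{xy}\in V^*$ for $x,y\in V$ by $\ell_{xy}(z)=\tilde\omega\big(x\barwedge Y(\zeta(y)z)\big)$ and $\ell'_{xy}(z)=\tilde\omega\big(x\barwedge Y'(\zeta(y)z)\big)$. *)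

theory Defs
  imports "HOL-Analysis.Analysis"
begin

text \<open>Coordinates: V = 'k^'n with CARD('n) = 3; V\<otimes>V = 'k^('n\<times>'n);
  V\<otimes>V\<otimes>V = 'k^('n\<times>'n\<times>'n), index (i,j,l) standing for e_i e_j e_l.\<close>

definition tensor2 :: "'k::field^'n \<Rightarrow> 'k^'n \<Rightarrow> 'k^('n::finite\<times>'n)" where
  "tensor2 x y = vec_lambda (\<lambda>(i,j). x$i * y$j)"

definition tensor3 :: "'k::field^'n \<Rightarrow> 'k^'n \<Rightarrow> 'k^'n \<Rightarrow> 'k^('n::finite\<times>'n\<times>'n)" where
  "tensor3 x y z = vec_lambda (\<lambda>(i,j,l). x$i * y$j * z$l)"

definition tensor21 :: "'k::field^('n\<times>'n) \<Rightarrow> 'k^'n \<Rightarrow> 'k^('n::finite\<times>'n\<times>'n)" where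
  "tensor21 w x = vec_lambda (\<lambda>(i,j,l). w$(i,j) * x$l)"

definition tensor12 :: "'k::field^'n \<Rightarrow> 'k^('n\<times>'n) \<Rightarrow> 'k^('n::finite\<times>'n\<times>'n)" where
  "tensor12 x w = vec_lambda (\<lambda>(i,j,l). x$i * w$(j,l))"

text \<open>A \<otimes> Id_V and Id_V \<otimes> A as operators on V\<otimes>V\<otimes>V.\<close>
definition lift12 :: "'k::field^('n\<times>'n)^('n\<times>'n) \<Rightarrow> 'k^('n::finite\<times>'n\<times>'n)^('n\<times>'n\<times>'n)" where
  "lift12 A = vec_lambda (\<lambda>(i,j,l). vec_lambda (\<lambda>(i',j',l').
      A$(i,j)$(i',j') * (if l = l' then 1 else 0)))"

definition lift23 :: "'k::field^('n\<times>'n)^('n\<times>'n) \<Rightarrow> 'k^('n::finite\<times>'n\<times>'n)^('n\<times>'n\<times>'n)" where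
  "lift23 A = vec_lambda (\<lambda>(i,j,l). vec_lambda (\<lambda>(i',j',l').
      (if i = i' then 1 else 0) * A$(j,l)$(j',l')))"

definition kron :: "'k::field^'n^'n \<Rightarrow> 'k^'n^'n \<Rightarrow> 'k^('n::finite\<times>'n)^('n\<times>'n)" where
  "kron A B = vec_lambda (\<lambda>(i,j). vec_lambda (\<lambda>(i',j'). A$i$i' * B$j$j'))"

text \<open>x \<barwedge> y = \<zeta>(x)y - \<zeta>(y)x, with \<zeta> given by the matrix Z.\<close>
definition barwedge2 :: "'k::field^'n^'n \<Rightarrow> 'k^'n \<Rightarrow> 'k^'n \<Rightarrow> 'k^('n::finite\<times>'n)" where
  "barwedge2 Z x y = tensor2 (Z *v x) y - tensor2 (Z *v y) x"

definition barwedge3 :: "'k::field^'n^'n \<Rightarrow> 'k^'n \<Rightarrow> 'k^'n \<Rightarrow> 'k^'n \<Rightarrow> 'k^('n::finite\<times>'n\<times>'n)" where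
  "barwedge3 Z x y z =
     tensor3 ((Z ** Z) *v x) (Z *v y) z + tensor3 ((Z ** Z) *v y) (Z *v z) x
   + tensor3 ((Z ** Z) *v z) (Z *v x) y - tensor3 ((Z ** Z) *v x) (Z *v z) y
   - tensor3 ((Z ** Z) *v y) (Z *v x) z - tensor3 ((Z ** Z) *v z) (Z *v y) x"

definition I2 :: "'k::field^'n^'n \<Rightarrow> ('k^('n::finite\<times>'n)) set" where
  "I2 Z = vec.span {barwedge2 Z x y | x y. True}"

definition I2_tensor_V :: "'k::field^'n^'n \<Rightarrow> ('k^('n::finite\<times>'n\<times>'n)) set" where
  "I2_tensor_V Z = vec.span {tensor21 w x | w x. w \<in> I2 Z}"

definition V_tensor_I2 :: "'k::field^'n^'n \<Rightarrow> ('k^('n::finite\<times>'n\<times>'n)) set" where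
  "V_tensor_I2 Z = vec.span {tensor12 x w | x w. w \<in> I2 Z}"

definition Upsilon3 :: "'k::field^'n^'n \<Rightarrow> ('k^('n::finite\<times>'n\<times>'n)) set" where
  "Upsilon3 Z = I2_tensor_V Z \<inter> V_tensor_I2 Z"

text \<open>x \<barwedge> w for w \<in> I_2, transported from the exterior product via the
  isomorphisms x\<and>y \<mapsto> x\<barwedge>y, x\<and>y\<and>z \<mapsto> x\<barwedge>y\<barwedge>z (bilinear extension of
  x \<barwedge> (a \<barwedge> b) = x \<barwedge> a \<barwedge> b).\<close>
definition barwedge_vw :: "'k::field^'n^'n \<Rightarrow> 'k^'n \<Rightarrow> 'k^('n::finite\<times>'n) \<Rightarrow> 'k^('n\<times>'n\<times>'n)" where
  "barwedge_vw Z x w = (THE t. \<exists>ps. w = sum_list (map (\<lambda>(a,b). barwedge2 Z a b) ps)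
        \<and> t = sum_list (map (\<lambda>(a,b). barwedge3 Z x a b) ps))"

definition omega_tilde :: "'k::field^'n^'n \<Rightarrow> ('k^'n \<Rightarrow> 'k^'n \<Rightarrow> 'k^'n \<Rightarrow> 'k)
      \<Rightarrow> 'k^('n::finite\<times>'n\<times>'n) \<Rightarrow> 'k" where
  "omega_tilde Z \<omega> t = (THE c. \<exists>ts. t = sum_list (map (\<lambda>(x,y,z). barwedge3 Z x y z) ts)
        \<and> c = sum_list (map (\<lambda>(x,y,z). \<omega> x y z) ts))"

definition ell :: "'k::field^'n^'n \<Rightarrow> ('k^'n \<Rightarrow> 'k^'n \<Rightarrow> 'k^'n \<Rightarrow> 'k)
      \<Rightarrow> 'k^('n::finite\<times>'n)^('n\<times>'n) \<Rightarrow> 'k^'n \<Rightarrow> 'k^'n \<Rightarrow> 'k^'n \<Rightarrow> 'k" where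
  "ell Z \<omega> Y x y = (\<lambda>z. omega_tilde Z \<omega> (barwedge_vw Z x (Y *v tensor2 (Z *v y) z)))"

definition linear_form :: "('k::field^'n::finite \<Rightarrow> 'k) \<Rightarrow> bool" where
  "linear_form f \<longleftrightarrow> (\<forall>u v. f (u + v) = f u + f v) \<and> (\<forall>c u. f (c *s u) = c * f u)"

definition trilinear :: "('k::field^'n::finite \<Rightarrow> 'k^'n \<Rightarrow> 'k^'n \<Rightarrow> 'k) \<Rightarrow> bool" where
  "trilinear \<omega> \<longleftrightarrow> (\<forall>y z. linear_form (\<lambda>x. \<omega> x y z)) \<and> (\<forall>x z. linear_form (\<lambda>y. \<omega> x y z))
       \<and> (\<forall>x y. linear_form (\<lambda>z. \<omega> x y z))"

definition alternating3 :: "('k::field^'n::finite \<Rightarrow> 'k^'n \<Rightarrow> 'k^'n \<Rightarrow> 'k) \<Rightarrow> bool" where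
  "alternating3 \<omega> \<longleftrightarrow> trilinear \<omega> \<and> (\<forall>x z. \<omega> x x z = 0) \<and> (\<forall>x y. \<omega> x y y = 0)
       \<and> (\<forall>x y. \<omega> x y x = 0)"

text \<open>\<Lambda>^2 V^* is identified with alternating bilinear forms on V:
  (l \<and> m)(u,v) = l(u)m(v) - l(v)m(u).\<close>
definition wedge_forms :: "('k::field^'n::finite \<Rightarrow> 'k) \<Rightarrow> ('k^'n \<Rightarrow> 'k) \<Rightarrow> 'k^'n \<Rightarrow> 'k^'n \<Rightarrow> 'k" where
  "wedge_forms l m = (\<lambda>u v. l u * m v - l v * m u)"

end

theory Submission
  imports Defs
begin

lemma sum_UNIV_pair: "(\<Sum>k\<in>(UNIV::('a::finite\<times>'b::finite) set). f k) = (\<Sum>i\<in>UNIV. \<Sum>j\<in>UNIV. f (i,j))"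
  by (simp add: sum.cartesian_product)

lemma sum_UNIV_triple: "(\<Sum>k\<in>(UNIV::('a::finite\<times>'b::finite\<times>'c::finite) set). f k) = (\<Sum>i\<in>UNIV. \<Sum>j\<in>UNIV. \<Sum>l\<in>UNIV. f (i,j,l))"
  by (simp add: sum_UNIV_pair)

lemma t2c[simp]: "tensor2 x y $ (i,j) = x$i * y$j" by (simp add: tensor2_def)
lemma t3c[simp]: "tensor3 x y z $ (i,j,l) = x$i * y$j * z$l" by (simp add: tensor3_def)
lemma t21c[simp]: "tensor21 w x $ (i,j,l) = w$(i,j) * x$l" by (simp add: tensor21_def)
lemma t12c[simp]: "tensor12 x w $ (i,j,l) = x$i * w$(j,l)" by (simp add: tensor12_def)

lemma mvpair: "((A::'k::semiring_1^('n::finite\<times>'n)^('m::finite\<times>'m)) *v t) $ (i,j) = (\<Sum>i'\<in>UNIV. \<Sum>j'\<in>UNIV. A$(i,j)$(i',j') * t$(i',j'))"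
  by (simp add: matrix_vector_mult_def sum_UNIV_pair)

lemma mvtriple: "((A::'k::semiring_1^('n::finite\<times>'n\<times>'n)^('m::finite\<times>'m\<times>'m)) *v t) $ (i,j,l) = (\<Sum>i'\<in>UNIV. \<Sum>j'\<in>UNIV. \<Sum>l'\<in>UNIV. A$(i,j,l)$(i',j',l') * t$(i',j',l'))"
  by (simp add: matrix_vector_mult_def sum_UNIV_triple)

lemma if_mult_zero[simp]: "(if P then (x::'a::mult_zero) else 0) * y = (if P then x*y else 0)"
  by simp

lemma mult_if_zero[simp]: "(y::'a::mult_zero) * (if P then x else 0) = (if P then y*x else 0)"
  by simp

lemma lift12_tensor21: "lift12 A *v tensor21 m s = tensor21 (A *v m) s"
  by (simp add: vec_eq_iff lift12_def mvtriple mvpair sum_distrib_right mult.assoc)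

definition slice :: "'k::field^('n::finite\<times>'n\<times>'n) \<Rightarrow> 'n \<Rightarrow> 'k^('n\<times>'n)" where
  "slice t i = vec_lambda (\<lambda>(j,l). t$(i,j,l))"
definition rowv :: "'k::field^('n::finite\<times>'n) \<Rightarrow> 'n \<Rightarrow> 'k^'n" where
  "rowv m i = vec_lambda (\<lambda>j. m$(i,j))"

lemma slice_c[simp]: "slice t i $ (j,l) = t$(i,j,l)" by (simp add: slice_def)
lemma rowv_c[simp]: "rowv m i $ j = m$(i,j)" by (simp add: rowv_def)

lemma sum_if_const[simp]: "(\<Sum>x\<in>A. if P then f x else 0) = (if P then sum f A else 0)"
  by (cases P) auto

lemma vec_eq_pair: "(\<And>i j. x$(i,j) = y$(i,j)) \<Longrightarrow> x = y"
  by (simp add: vec_eq_iff)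

lemma slice_lift23: "slice (lift23 A *v t) i = A *v slice t i"
  by (simp add: vec_eq_iff lift23_def mvtriple mvpair sum_distrib_right mult.assoc)
lemma slice_tensor21: "slice (tensor21 m s) i = tensor2 (rowv m i) s"
  by (simp add: vec_eq_iff)
lemma slice_tensor12: "slice (tensor12 v m) i = v$i *s m"
  by (simp add: vec_eq_iff)
lemma slice_add[simp]: "slice (t1 + t2) i = slice t1 i + slice t2 i" by (simp add: vec_eq_iff)
lemma slice_diff[simp]: "slice (t1 - t2) i = slice t1 i - slice t2 i" by (simp add: vec_eq_iff)
lemma slice_scale[simp]: "slice (c *s t) i = c *s slice t i" by (simp add: vec_eq_iff)
lemma slice_zero[simp]: "slice 0 i = 0" by (simp add: vec_eq_iff)
lemma rowv_add[simp]: "rowv (t1 + t2) i = rowv t1 i + rowv t2 i" by (simp add: vec_eq_iff)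
lemma rowv_diff[simp]: "rowv (t1 - t2) i = rowv t1 i - rowv t2 i" by (simp add: vec_eq_iff)
lemma rowv_scale[simp]: "rowv (c *s t) i = c *s rowv t i" by (simp add: vec_eq_iff)
lemma rowv_zero[simp]: "rowv 0 i = 0" by (simp add: vec_eq_iff)
lemma rowv_tensor2: "rowv (tensor2 p r) i = p$i *s r" by (simp add: vec_eq_iff)

lemma tensor21_add: "tensor21 (w1 + w2) s = tensor21 w1 s + tensor21 w2 s" by (simp add: vec_eq_iff algebra_simps)
lemma tensor21_diff: "tensor21 (w1 - w2) s = tensor21 w1 s - tensor21 w2 s" by (simp add: vec_eq_iff algebra_simps)
lemma tensor21_scale: "tensor21 (c *s w) s = c *s tensor21 w s" by (simp add: vec_eq_iff algebra_simps)
lemma tensor21_zero: "tensor21 0 s = 0" by (simp add: vec_eq_iff)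
lemma tensor12_add: "tensor12 v (w1 + w2) = tensor12 v w1 + tensor12 v w2" by (simp add: vec_eq_iff algebra_simps)
lemma tensor12_diff: "tensor12 v (w1 - w2) = tensor12 v w1 - tensor12 v w2" by (simp add: vec_eq_iff algebra_simps)
lemma tensor12_scale: "tensor12 v (c *s w) = c *s tensor12 v w" by (simp add: vec_eq_iff algebra_simps)
lemma tensor12_zero: "tensor12 v 0 = 0" by (simp add: vec_eq_iff)
lemma tensor21_tensor2: "tensor21 (tensor2 p r) s = tensor3 p r s" by (simp add: vec_eq_iff)
lemma tensor12_tensor2: "tensor12 p (tensor2 r s) = tensor3 p r s" by (simp add: vec_eq_iff algebra_simps)
lemma tensor2_scale1: "tensor2 (c *s p) r = c *s tensor2 p r" by (simp add: vec_eq_iff algebra_simps)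
lemma tensor3_scale1: "tensor3 (c *s p) r s = c *s tensor3 p r s" by (simp add: vec_eq_iff algebra_simps)

lemma kron_tensor2: "kron A B *v tensor2 p r = tensor2 (A *v p) (B *v r)"
  apply (rule vec_eq_pair)
  apply (simp only: mvpair)
  apply (simp add: kron_def matrix_vector_mult_def sum_product algebra_simps)
  done

lemma kron_kron: "kron A B *v (kron C D *v t) = kron (A ** C) (B ** D) *v t"
proof -
  have "kron A B *v (kron C D *v t) = (kron A B ** kron C D) *v t" by (simp add: matrix_vector_mul_assoc)
  moreover have "kron A B ** kron C D = kron (A ** C) (B ** D)"
    by (simp add: vec_eq_iff kron_def matrix_matrix_mult_def sum_UNIV_pair sum_product algebra_simps)
  ultimately show ?thesis by simp
qed

lemma kron_id: "kron (mat 1) (mat 1) = (mat 1 :: 'k::field^('n::finite\<times>'n)^('n\<times>'n))"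
  by (auto simp add: vec_eq_iff kron_def mat_def)

lemma bw2_scale: "c *s barwedge2 Z p r = barwedge2 Z (c *s p) r"
  by (simp add: barwedge2_def vec_eq_iff vector_scalar_commute algebra_simps)

lemma bw2_in_I2: "barwedge2 Z p r \<in> I2 Z"
  unfolding I2_def by (rule vec.span_base) auto

lemma I2_rep: "w \<in> I2 Z \<Longrightarrow> \<exists>ps. w = sum_list (map (\<lambda>(a,b). barwedge2 Z a b) ps)"
  unfolding I2_def
proof (induction rule: vec.span_induct_alt)
  case base
  then show ?case by (intro exI[of _ "[]"]) simp
next
  case (step c x y)
  then obtain p r where x: "x = barwedge2 Z p r" by auto
  from step obtain ps where y: "y = sum_list (map (\<lambda>(a,b). barwedge2 Z a b) ps)" by auto
  show ?case by (intro exI[of _ "(c *s p, r) # ps"]) (simp add: x y bw2_scale)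
qed

lemma mat_neg_mv: "(mat q - R) *v t = - ((R - mat q) *v (t::'k::field^'m::finite))"
  by (simp add: vec_eq_iff matrix_vector_mult_def algebra_simps sum_negf sum_subtractf)

locale S3 =
  fixes Z Zi :: "'k::field^'n::finite^'n" and \<omega> :: "'k^'n \<Rightarrow> 'k^'n \<Rightarrow> 'k^'n \<Rightarrow> 'k"
    and a b c :: 'n
  assumes ZZi: "Z ** Zi = mat 1" and ZiZ: "Zi ** Z = mat 1"
    and univ: "(UNIV::'n set) = {a,b,c}" and dab: "a \<noteq> b" and dbc: "b \<noteq> c" and dac: "a \<noteq> c"
    and alt: "alternating3 \<omega>"
begin

lemma cases3: "i = a \<or> i = b \<or> i = c"
proof -
  have "i \<in> {a,b,c}" by (simp only: univ[symmetric]) simp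
  then show ?thesis by simp
qed

lemma sumU: "sum f (UNIV::'n set) = f a + f b + f c"
proof -
  have "sum f (UNIV::'n set) = sum f {a,b,c}" by (simp only: univ)
  also have "\<dots> = f a + f b + f c" using dab dbc dac by (simp add: algebra_simps)
  finally show ?thesis .
qed

lemma vec_eq3: "(x::'k^'n) = y \<longleftrightarrow> x$a = y$a \<and> x$b = y$b \<and> x$c = y$c"
  unfolding vec_eq_iff by (metis cases3)

lemma lf_add: "linear_form f \<Longrightarrow> f (u + v) = f u + f v" by (simp add: linear_form_def)
lemma lf_scale: "linear_form f \<Longrightarrow> f (r *s u) = r * f u" by (simp add: linear_form_def)

lemma om_add1[simp]: "\<omega> (u + v) y z = \<omega> u y z + \<omega> v y z"
  using alt unfolding alternating3_def trilinear_def linear_form_def by auto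
lemma om_add2[simp]: "\<omega> x (u + v) z = \<omega> x u z + \<omega> x v z"
  using alt unfolding alternating3_def trilinear_def linear_form_def by auto
lemma om_add3[simp]: "\<omega> x y (u + v) = \<omega> x y u + \<omega> x y v"
  using alt unfolding alternating3_def trilinear_def linear_form_def by auto
lemma om_scale1[simp]: "\<omega> (r *s u) y z = r * \<omega> u y z"
  using alt unfolding alternating3_def trilinear_def linear_form_def by auto
lemma om_scale2[simp]: "\<omega> x (r *s u) z = r * \<omega> x u z"
  using alt unfolding alternating3_def trilinear_def linear_form_def by auto
lemma om_scale3[simp]: "\<omega> x y (r *s u) = r * \<omega> x y u"
  using alt unfolding alternating3_def trilinear_def linear_form_def by auto
lemma om_xxz[simp]: "\<omega> x x z = 0" using alt unfolding alternating3_def by blast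
lemma om_xyy[simp]: "\<omega> x y y = 0" using alt unfolding alternating3_def by blast
lemma om_xyx[simp]: "\<omega> x y x = 0" using alt unfolding alternating3_def by blast

lemma om_swap12: "\<omega> y x z = - \<omega> x y z"
proof -
  have "0 = \<omega> (x + y) (x + y) z" by simp
  also have "\<dots> = \<omega> x y z + \<omega> y x z" by (simp only: om_add1 om_add2) simp
  finally show ?thesis by (metis add.commute eq_neg_iff_add_eq_0)
qed
lemma om_swap23: "\<omega> x z y = - \<omega> x y z"
proof -
  have "0 = \<omega> x (y + z) (y + z)" by simp
  also have "\<dots> = \<omega> x y z + \<omega> x z y" by (simp only: om_add2 om_add3) simp
  finally show ?thesis by (metis add.commute eq_neg_iff_add_eq_0)
qed

abbreviation e :: "'n \<Rightarrow> 'k^'n" where "e i \<equiv> axis i 1"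

definition D :: "'k^'n \<Rightarrow> 'k^'n \<Rightarrow> 'k^'n \<Rightarrow> 'k" where
  "D x y z = x$a*y$b*z$c + y$a*z$b*x$c + z$a*x$b*y$c - x$a*z$b*y$c - y$a*x$b*z$c - z$a*y$b*x$c"

lemma vexp: "x = x$a *s e a + x$b *s e b + x$c *s e c"
  using dab dbc dac by (simp add: vec_eq3 axis_def)

definition w0 where "w0 = \<omega> (e a) (e b) (e c)"

lemma basis_vals:
  "\<omega> (e b) (e a) (e c) = - w0" "\<omega> (e a) (e c) (e b) = - w0" "\<omega> (e c) (e b) (e a) = - w0"
  "\<omega> (e b) (e c) (e a) = w0" "\<omega> (e c) (e a) (e b) = w0"
  unfolding w0_def by (metis om_swap12 om_swap23 minus_minus)+

lemma om_expand: "\<omega> x y z = w0 * D x y z"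
proof -
  have "\<omega> x y z = \<omega> (x$a *s e a + x$b *s e b + x$c *s e c) (y$a *s e a + y$b *s e b + y$c *s e c) (z$a *s e a + z$b *s e b + z$c *s e c)"
    using vexp by metis
  also have "\<dots> = w0 * D x y z"
    by (simp add: basis_vals D_def flip: w0_def) (simp add: algebra_simps)
  finally show ?thesis .
qed

lemma pluecker: "\<omega> y p r *s x - \<omega> x p r *s y + \<omega> x y r *s p - \<omega> x y p *s r = 0"
  by (simp add: vec_eq3 om_expand D_def) (simp add: algebra_simps)

lemma pfaff: "\<omega> x y p * \<omega> x r s + \<omega> x y r * \<omega> x s p + \<omega> x y s * \<omega> x p r = 0"
  by (simp add: om_expand D_def) (simp add: algebra_simps)

end

lemma additive_sum_list:
  assumes "\<And>u v. f (u+v) = f u + f v" "f 0 = 0"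
  shows "f (sum_list (map g xs)) = sum_list (map (\<lambda>x. f (g x)) xs)"
  by (induction xs) (simp_all add: assms)

context S3 begin

definition ins :: "'k^'n \<Rightarrow> 'k^('n\<times>'n) \<Rightarrow> 'k^('n\<times>'n\<times>'n)" where
  "ins x m = vec_lambda (\<lambda>(i,j,l). (\<Sum>p\<in>UNIV. Z$i$p * m$(p,l)) * (Z *v x)$j)"

definition Lx :: "'k^'n \<Rightarrow> 'k^('n\<times>'n) \<Rightarrow> 'k^('n\<times>'n\<times>'n)" where
  "Lx x m = tensor12 ((Z**Z) *v x) m + tensor21 (kron Z Z *v m) x - ins x m"

lemma ins_c: "ins x m $ (i,j,l) = (\<Sum>p\<in>UNIV. Z$i$p * m$(p,l)) * (Z *v x)$j"
  by (simp add: ins_def)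

lemma ins_add: "ins x (m1 + m2) = ins x m1 + ins x m2"
  by (simp add: vec_eq_iff ins_def algebra_simps sum.distrib)
lemma ins_scale: "ins x (r *s m) = r *s ins x m"
  by (simp add: vec_eq_iff ins_def algebra_simps sum_distrib_left)
lemma ins_tensor2: "ins x (tensor2 p r) = tensor3 (Z *v p) (Z *v x) r"
proof -
  have "(\<Sum>q\<in>UNIV. Z$i$q * tensor2 p r $(q,l)) = (Z *v p)$i * r$l" for i l
    by (simp add: matrix_vector_mult_def sum_distrib_right mult.assoc)
  then show ?thesis by (simp add: vec_eq_iff ins_def)
qed

lemma Lx_add: "Lx x (m1 + m2) = Lx x m1 + Lx x m2"
  by (simp add: Lx_def ins_add tensor12_add tensor21_add matrix_vector_right_distrib algebra_simps)
lemma Lx_scale: "Lx x (r *s m) = r *s Lx x m"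
  by (simp add: Lx_def ins_scale tensor12_scale tensor21_scale vector_scalar_commute vector_ssub_ldistrib vector_sadd_rdistrib)
lemma Lx_zero: "Lx x 0 = 0"
  using Lx_scale[of x 0 0] by simp
lemma Lx_diff: "Lx x (m1 - m2) = Lx x m1 - Lx x m2"
  using Lx_add[of x "m1 - m2" m2] by (simp add: algebra_simps)

lemma Lx_tensor2: "Lx x (tensor2 p r) = tensor3 ((Z**Z) *v x) p r + tensor3 (Z *v p) (Z *v r) x - tensor3 (Z *v p) (Z *v x) r"
  by (simp add: Lx_def ins_tensor2 kron_tensor2 tensor12_tensor2 tensor21_tensor2)

lemma Lx_bw2: "Lx x (barwedge2 Z p r) = barwedge3 Z x p r"
  by (simp add: barwedge2_def barwedge3_def Lx_diff Lx_tensor2 matrix_vector_mul_assoc vec_eq_iff algebra_simps)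

definition Om :: "'k^('n\<times>'n\<times>'n) \<Rightarrow> 'k" where
  "Om t = w0 * (\<Sum>i\<in>UNIV. \<Sum>j\<in>UNIV. (Zi**Zi)$a$i * Zi$b$j * t$(i,j,c))"

lemma Om_add: "Om (t1 + t2) = Om t1 + Om t2"
  by (simp add: Om_def algebra_simps sum.distrib)
lemma Om_scale: "Om (r *s t) = r * Om t"
  by (simp add: Om_def algebra_simps sum_distrib_left)
lemma Om_zero: "Om 0 = 0" by (simp add: Om_def)
lemma Om_diff: "Om (t1 - t2) = Om t1 - Om t2"
  using Om_add[of "t1 - t2" t2] by (simp add: algebra_simps)

lemma Om_tensor3: "Om (tensor3 P Q S) = w0 * (((Zi**Zi) *v P)$a * (Zi *v Q)$b * S$c)"
proof -
  have "(\<Sum>i\<in>UNIV. \<Sum>j\<in>UNIV. (Zi**Zi)$a$i * Zi$b$j * tensor3 P Q S $(i,j,c))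
     = (\<Sum>i\<in>UNIV. \<Sum>j\<in>UNIV. ((Zi**Zi)$a$i * P$i) * (Zi$b$j * Q$j)) * S$c"
    by (simp add: sum_distrib_right sum_distrib_left mult_ac)
  also have "\<dots> = ((Zi**Zi) *v P)$a * (Zi *v Q)$b * S$c"
    by (simp add: matrix_vector_mult_def sum_product)
  finally show ?thesis by (simp add: Om_def)
qed

lemma ZiZ_v[simp]: "Zi *v (Z *v y) = y"
  by (simp add: matrix_vector_mul_assoc ZiZ)
lemma ZZi_v[simp]: "Z *v (Zi *v y) = y"
  by (simp add: matrix_vector_mul_assoc ZZi)
lemma Zi2Z2_v[simp]: "(Zi**Zi) *v ((Z**Z) *v y) = y"
  by (simp flip: matrix_vector_mul_assoc)

lemma Om_bw3: "Om (barwedge3 Z x y z) = \<omega> x y z"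
  by (simp add: barwedge3_def Om_add Om_diff Om_tensor3 om_expand D_def algebra_simps)

definition lam :: "'k^'n \<Rightarrow> 'k^('n\<times>'n) \<Rightarrow> 'k" where
  "lam x m = Om (Lx x m)"

lemma lam_add: "lam x (m1 + m2) = lam x m1 + lam x m2" by (simp add: lam_def Lx_add Om_add)
lemma lam_scale: "lam x (r *s m) = r * lam x m" by (simp add: lam_def Lx_scale Om_scale)
lemma lam_diff: "lam x (m1 - m2) = lam x m1 - lam x m2" by (simp add: lam_def Lx_diff Om_diff)
lemma lam_zero: "lam x 0 = 0" by (simp add: lam_def Lx_zero Om_zero)
lemma lam_bw2: "lam x (barwedge2 Z p r) = \<omega> x p r" by (simp add: lam_def Lx_bw2 Om_bw3)

lemma bvw_eq:
  assumes "w \<in> I2 Z" shows "barwedge_vw Z x w = Lx x w"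
  unfolding barwedge_vw_def
proof (rule the_equality)
  have key: "Lx x (sum_list (map (\<lambda>(p,r). barwedge2 Z p r) ps)) = sum_list (map (\<lambda>(p,r). barwedge3 Z x p r) ps)" for ps
    by (induction ps) (auto simp: Lx_add Lx_zero Lx_bw2)
  obtain ps where ps: "w = sum_list (map (\<lambda>(p,r). barwedge2 Z p r) ps)" using I2_rep[OF assms] by blast
  show "\<exists>ps. w = sum_list (map (\<lambda>(a,b). barwedge2 Z a b) ps) \<and> Lx x w = sum_list (map (\<lambda>(a,b). barwedge3 Z x a b) ps)"
    using ps key by blast
  fix t assume "\<exists>ps. w = sum_list (map (\<lambda>(a,b). barwedge2 Z a b) ps) \<and> t = sum_list (map (\<lambda>(a,b). barwedge3 Z x a b) ps)"
  then show "t = Lx x w" using key by metis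
qed

lemma omt_eq:
  assumes "w \<in> I2 Z" shows "omega_tilde Z \<omega> (Lx x w) = lam x w"
  unfolding omega_tilde_def lam_def
proof (rule the_equality)
  have key: "Om (sum_list (map (\<lambda>(p,r,s). barwedge3 Z p r s) ts)) = sum_list (map (\<lambda>(p,r,s). \<omega> p r s) ts)" for ts
    by (induction ts) (auto simp: Om_add Om_zero Om_bw3)
  have key2: "Lx x (sum_list (map (\<lambda>(p,r). barwedge2 Z p r) ps)) = sum_list (map (\<lambda>(p,r,s). barwedge3 Z p r s) (map (\<lambda>(p,r). (x,p,r)) ps))" for ps
    by (induction ps) (auto simp: Lx_add Lx_zero Lx_bw2)
  obtain ps where ps: "w = sum_list (map (\<lambda>(p,r). barwedge2 Z p r) ps)" using I2_rep[OF assms] by blast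
  show "\<exists>ts. Lx x w = sum_list (map (\<lambda>(x,y,z). barwedge3 Z x y z) ts) \<and> Om (Lx x w) = sum_list (map (\<lambda>(x,y,z). \<omega> x y z) ts)"
    using ps key key2 by metis
  fix t assume "\<exists>ts. Lx x w = sum_list (map (\<lambda>(x,y,z). barwedge3 Z x y z) ts) \<and> t = sum_list (map (\<lambda>(x,y,z). \<omega> x y z) ts)"
  then show "t = Om (Lx x w)" using key by metis
qed

lemma ell_eq:
  assumes "Y *v tensor2 (Z *v y) z \<in> I2 Z"
  shows "ell Z \<omega> Y x y z = lam x (Y *v tensor2 (Z *v y) z)"
  by (simp add: ell_def bvw_eq[OF assms] omt_eq[OF assms])

end

context S3 begin

definition Phi :: "'k^'n \<Rightarrow> 'k^'n \<Rightarrow> 'k^('n\<times>'n\<times>'n) \<Rightarrow> 'k" where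
  "Phi x y t = (\<Sum>i\<in>UNIV. \<omega> x y ((Zi**Zi) *v e i) * lam x (slice t i))"

lemma Phi_add: "Phi x y (t1 + t2) = Phi x y t1 + Phi x y t2"
  by (simp add: Phi_def lam_add algebra_simps sum.distrib)
lemma Phi_scale: "Phi x y (r *s t) = r * Phi x y t"
  by (simp add: Phi_def lam_scale algebra_simps sum_distrib_left)
lemma Phi_diff: "Phi x y (t1 - t2) = Phi x y t1 - Phi x y t2"
  by (simp add: Phi_def lam_diff algebra_simps sum_subtractf)

lemma gsum: "(\<Sum>i\<in>UNIV. \<omega> x y ((Zi**Zi) *v e i) * P$i) = \<omega> x y ((Zi**Zi) *v P)"
proof -
  have "(Zi**Zi) *v P = P$a *s ((Zi**Zi) *v e a) + P$b *s ((Zi**Zi) *v e b) + P$c *s ((Zi**Zi) *v e c)"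
    by (subst vexp[of P]) (simp add: matrix_vector_right_distrib vector_scalar_commute)
  then show ?thesis by (simp add: sumU algebra_simps)
qed

lemma Phi_tensor12: "Phi x y (tensor12 P m) = \<omega> x y ((Zi**Zi) *v P) * lam x m"
proof -
  have "Phi x y (tensor12 P m) = (\<Sum>i\<in>UNIV. \<omega> x y ((Zi**Zi) *v e i) * P$i) * lam x m"
    by (simp add: Phi_def slice_tensor12 lam_scale sum_distrib_right mult.assoc)
  then show ?thesis by (simp add: gsum)
qed

lemma Phi_tensor3: "Phi x y (tensor3 P Q S) = \<omega> x y ((Zi**Zi) *v P) * lam x (tensor2 Q S)"
  by (simp add: Phi_tensor12 flip: tensor12_tensor2)

lemma lam_t2: "lam x (tensor2 (Z *v r) s) - lam x (tensor2 (Z *v s) r) = \<omega> x r s"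
  by (simp add: lam_bw2 flip: lam_diff barwedge2_def)

lemma Phi_bw3: "Phi x y (barwedge3 Z p r s) = 0"
proof -
  define A where "A r s = lam x (tensor2 (Z *v r) s)" for r s
  have "Phi x y (barwedge3 Z p r s) = \<omega> x y p * (A r s - A s r) + \<omega> x y r * (A s p - A p s) + \<omega> x y s * (A p r - A r p)"
    by (simp add: barwedge3_def Phi_add Phi_diff Phi_tensor3 A_def algebra_simps)
  also have "\<dots> = \<omega> x y p * \<omega> x r s + \<omega> x y r * \<omega> x s p + \<omega> x y s * \<omega> x p r"
    by (simp add: A_def lam_t2)
  also have "\<dots> = 0" by (rule pfaff)
  finally show ?thesis .
qed

end

definition op1 :: "'k::field^'n^'n \<Rightarrow> 'k^('n::finite\<times>'n\<times>'n) \<Rightarrow> 'k^('n\<times>'n\<times>'n)" where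
  "op1 A t = vec_lambda (\<lambda>(i,j,l). \<Sum>i'\<in>UNIV. A$i$i' * t$(i',j,l))"
definition op2 :: "'k::field^'n^'n \<Rightarrow> 'k^('n::finite\<times>'n\<times>'n) \<Rightarrow> 'k^('n\<times>'n\<times>'n)" where
  "op2 B t = vec_lambda (\<lambda>(i,j,l). \<Sum>j'\<in>UNIV. B$j$j' * t$(i,j',l))"

lemma op1_c: "op1 A t $ (i,j,l) = (\<Sum>i'\<in>UNIV. A$i$i' * t$(i',j,l))" by (simp add: op1_def)
lemma op2_c: "op2 B t $ (i,j,l) = (\<Sum>j'\<in>UNIV. B$j$j' * t$(i,j',l))" by (simp add: op2_def)

lemma op1_add: "op1 A (t1 + t2) = op1 A t1 + op1 A t2" by (simp add: vec_eq_iff op1_def algebra_simps sum.distrib)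
lemma op1_scale: "op1 A (r *s t) = r *s op1 A t" by (simp add: vec_eq_iff op1_def algebra_simps sum_distrib_left)
lemma op1_diff: "op1 A (t1 - t2) = op1 A t1 - op1 A t2" by (simp add: vec_eq_iff op1_def algebra_simps sum_subtractf)
lemma op2_add: "op2 A (t1 + t2) = op2 A t1 + op2 A t2" by (simp add: vec_eq_iff op2_def algebra_simps sum.distrib)
lemma op2_scale: "op2 A (r *s t) = r *s op2 A t" by (simp add: vec_eq_iff op2_def algebra_simps sum_distrib_left)
lemma op2_diff: "op2 A (t1 - t2) = op2 A t1 - op2 A t2" by (simp add: vec_eq_iff op2_def algebra_simps sum_subtractf)
lemma op1_zero: "op1 A 0 = 0" by (simp add: vec_eq_iff op1_def)
lemma op2_zero: "op2 A 0 = 0" by (simp add: vec_eq_iff op2_def)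

lemma op1_t3: "op1 A (tensor3 p r s) = tensor3 (A *v p) r s"
  by (simp add: vec_eq_iff op1_def matrix_vector_mult_def sum_distrib_right sum_distrib_left mult_ac)
lemma op2_t3: "op2 B (tensor3 p r s) = tensor3 p (B *v r) s"
  by (simp add: vec_eq_iff op2_def matrix_vector_mult_def sum_distrib_right sum_distrib_left mult_ac)

lemma vec_eq_triple: "(\<And>i j l. x$(i,j,l) = y$(i,j,l)) \<Longrightarrow> x = y"
  by (simp add: vec_eq_iff)

lemma op1_op1: "op1 A (op1 B t) = op1 (A ** B) t"
  apply (rule vec_eq_triple)
  apply (simp add: op1_c matrix_matrix_mult_def sum_distrib_left sum_distrib_right mult_ac)
  apply (rule sum.swap)
  done
lemma op2_op2: "op2 A (op2 B t) = op2 (A ** B) t"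
  apply (rule vec_eq_triple)
  apply (simp add: op2_c matrix_matrix_mult_def sum_distrib_left sum_distrib_right mult_ac)
  apply (rule sum.swap)
  done
lemma op2_op1: "op2 B (op1 A t) = op1 A (op2 B t)"
  apply (rule vec_eq_triple)
  apply (simp add: op1_c op2_c sum_distrib_left sum_distrib_right mult_ac)
  apply (rule sum.swap)
  done
lemma op1_id: "op1 (mat 1) t = t"
  by (rule vec_eq_triple) (simp add: op1_c mat_def)
lemma op2_id: "op2 (mat 1) t = t"
  by (rule vec_eq_triple) (simp add: op2_c mat_def)

definition alt12 :: "'k::field^('n::finite\<times>'n\<times>'n) \<Rightarrow> bool" where
  "alt12 t \<longleftrightarrow> (\<forall>i j l. t$(i,j,l) = - t$(j,i,l)) \<and> (\<forall>i l. t$(i,i,l) = 0)"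
definition alt23 :: "'k::field^('n::finite\<times>'n\<times>'n) \<Rightarrow> bool" where
  "alt23 t \<longleftrightarrow> (\<forall>i j l. t$(i,j,l) = - t$(i,l,j)) \<and> (\<forall>i j. t$(i,j,j) = 0)"

lemma alt12_0: "alt12 0" by (simp add: alt12_def)
lemma alt23_0: "alt23 0" by (simp add: alt23_def)
lemma alt12_comb:
  assumes "alt12 t1" "alt12 t2" shows "alt12 (r *s t1 + t2)"
proof -
  have h1: "t1$(i,j,l) = - t1$(j,i,l)" "t1$(i,i,l) = 0" for i j l using assms(1) unfolding alt12_def by blast+
  have h2: "t2$(i,j,l) = - t2$(j,i,l)" "t2$(i,i,l) = 0" for i j l using assms(2) unfolding alt12_def by blast+
  have "(r *s t1 + t2)$(i,j,l) = - (r *s t1 + t2)$(j,i,l)" for i j l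
  proof -
    have "(r *s t1 + t2)$(i,j,l) = r * t1$(i,j,l) + t2$(i,j,l)" by simp
    also have "\<dots> = r * (- t1$(j,i,l)) + (- t2$(j,i,l))" by (subst h1(1), subst h2(1), rule refl)
    also have "\<dots> = - (r *s t1 + t2)$(j,i,l)" by (simp add: algebra_simps)
    finally show ?thesis .
  qed
  moreover have "(r *s t1 + t2)$(i,i,l) = 0" for i l by (simp add: h1(2) h2(2))
  ultimately show ?thesis unfolding alt12_def by blast
qed
lemma alt23_comb:
  assumes "alt23 t1" "alt23 t2" shows "alt23 (r *s t1 + t2)"
proof -
  have h1: "t1$(i,j,l) = - t1$(i,l,j)" "t1$(i,j,j) = 0" for i j l using assms(1) unfolding alt23_def by blast+
  have h2: "t2$(i,j,l) = - t2$(i,l,j)" "t2$(i,j,j) = 0" for i j l using assms(2) unfolding alt23_def by blast+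
  have "(r *s t1 + t2)$(i,j,l) = - (r *s t1 + t2)$(i,l,j)" for i j l
  proof -
    have "(r *s t1 + t2)$(i,j,l) = r * t1$(i,j,l) + t2$(i,j,l)" by simp
    also have "\<dots> = r * (- t1$(i,l,j)) + (- t2$(i,l,j))" by (subst h1(1), subst h2(1), rule refl)
    also have "\<dots> = - (r *s t1 + t2)$(i,l,j)" by (simp add: algebra_simps)
    finally show ?thesis .
  qed
  moreover have "(r *s t1 + t2)$(i,j,j) = 0" for i j by (simp add: h1(2) h2(2))
  ultimately show ?thesis unfolding alt23_def by blast
qed
lemma alt12_t3: "alt12 (tensor3 p r s - tensor3 r p s)" by (simp add: alt12_def algebra_simps)
lemma alt23_t3: "alt23 (tensor3 p r s - tensor3 p s r)" by (simp add: alt23_def algebra_simps)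

context S3 begin

definition TT :: "'k^('n\<times>'n\<times>'n) \<Rightarrow> 'k^('n\<times>'n\<times>'n)" where
  "TT t = op1 (Zi**Zi) (op2 Zi t)"

lemma TT_comb: "TT (r *s t1 + t2) = r *s TT t1 + TT t2"
  by (simp add: TT_def op1_add op2_add op1_scale op2_scale)
lemma TT_zero: "TT 0 = 0" by (simp add: TT_def op1_zero op2_zero)
lemma TT_t3: "TT (tensor3 p r s) = tensor3 ((Zi**Zi) *v p) (Zi *v r) s"
  by (simp add: TT_def op1_t3 op2_t3)
lemma Zi2Z: "(Zi**Zi) *v (Z *v p) = Zi *v p"
  by (metis ZiZ_v matrix_vector_mul_assoc)

lemma tensor21_comb: "tensor21 (r *s w1 + w2) s = r *s tensor21 w1 s + tensor21 w2 s"
  by (simp add: tensor21_add tensor21_scale)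
lemma tensor12_comb: "tensor12 v (r *s w1 + w2) = r *s tensor12 v w1 + tensor12 v w2"
  by (simp add: tensor12_add tensor12_scale)

lemma alt12_gen: "w \<in> I2 Z \<Longrightarrow> alt12 (TT (tensor21 w s))"
  unfolding I2_def
proof (induction rule: vec.span_induct_alt)
  case base then show ?case by (simp add: tensor21_zero TT_zero alt12_0)
next
  case (step r x y)
  then obtain p q where x: "x = barwedge2 Z p q" by auto
  have "TT (tensor21 x s) = tensor3 (Zi *v p) (Zi *v q) s - tensor3 (Zi *v q) (Zi *v p) s"
    by (simp add: x barwedge2_def tensor21_diff tensor21_tensor2 TT_def op1_diff op2_diff)
      (simp add: op1_t3 op2_t3 Zi2Z)
  then have "alt12 (TT (tensor21 x s))" by (simp add: alt12_t3)
  then show ?case using step by (simp add: tensor21_comb TT_comb alt12_comb)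
qed

lemma alt23_gen: "w \<in> I2 Z \<Longrightarrow> alt23 (TT (tensor12 v w))"
  unfolding I2_def
proof (induction rule: vec.span_induct_alt)
  case base then show ?case by (simp add: tensor12_zero TT_zero alt23_0)
next
  case (step r x y)
  then obtain p q where x: "x = barwedge2 Z p q" by auto
  have "TT (tensor12 v x) = tensor3 ((Zi**Zi) *v v) p q - tensor3 ((Zi**Zi) *v v) q p"
    by (simp add: x barwedge2_def tensor12_diff tensor12_tensor2 TT_def op1_diff op2_diff)
      (simp add: op1_t3 op2_t3)
  then have "alt23 (TT (tensor12 v x))" by (simp add: alt23_t3)
  then show ?case using step by (simp add: tensor12_comb TT_comb alt23_comb)
qed

lemma alt12_I2V: "t \<in> I2_tensor_V Z \<Longrightarrow> alt12 (TT t)"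
  unfolding I2_tensor_V_def
proof (induction rule: vec.span_induct_alt)
  case base then show ?case by (simp add: TT_zero alt12_0)
next
  case (step r x y)
  then show ?case using alt12_gen by (auto simp: TT_comb intro!: alt12_comb)
qed

lemma alt23_VI2: "t \<in> V_tensor_I2 Z \<Longrightarrow> alt23 (TT t)"
  unfolding V_tensor_I2_def
proof (induction rule: vec.span_induct_alt)
  case base then show ?case by (simp add: TT_zero alt23_0)
next
  case (step r x y)
  then show ?case using alt23_gen by (auto simp: TT_comb intro!: alt23_comb)
qed

definition Alt3 :: "'k^('n\<times>'n\<times>'n)" where
  "Alt3 = tensor3 (e a) (e b) (e c) + tensor3 (e b) (e c) (e a) + tensor3 (e c) (e a) (e b)
        - tensor3 (e a) (e c) (e b) - tensor3 (e b) (e a) (e c) - tensor3 (e c) (e b) (e a)"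

lemma alt_rep:
  assumes "alt12 t" "alt23 t"
  shows "t = t$(a,b,c) *s Alt3"
proof -
  have s12: "t$(i,j,l) = - t$(j,i,l)" and s23: "t$(i,j,l) = - t$(i,l,j)"
    and z12: "t$(i,i,l) = 0" and z23: "t$(i,j,j) = 0" for i j l
    using assms unfolding alt12_def alt23_def by blast+
  have z13: "t$(i,j,i) = 0" for i j using s12[of i j i] z23[of j i] by simp
  have p1: "t$(a,c,b) = - t$(a,b,c)" using s23 by metis
  have p2: "t$(b,a,c) = - t$(a,b,c)" using s12 by metis
  have p3: "t$(b,c,a) = t$(a,b,c)" using s12[of b c a] s23[of c b a] s12[of c a b] s23[of a c b] by simp
  have p4: "t$(c,a,b) = t$(a,b,c)" using s12[of c a b] s23[of a c b] by simp
  have p5: "t$(c,b,a) = - t$(a,b,c)" using s12[of c b a] p3 by simp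
  show ?thesis
  proof (rule vec_eq_triple)
    fix i j l
    show "t $ (i,j,l) = (t$(a,b,c) *s Alt3) $ (i,j,l)"
      using cases3[of i] cases3[of j] cases3[of l] dab dbc dac
      by (elim disjE) (simp_all add: Alt3_def axis_def z12 z23 z13 p1 p2 p3 p4 p5 dab dbc dac not_sym[OF dab] not_sym[OF dbc] not_sym[OF dac])
  qed
qed

lemma TT_inv: "op1 (Z**Z) (op2 Z (TT t)) = t"
proof -
  have m: "(Z**Z)**(Zi**Zi) = mat 1"
    by (metis ZZi matrix_mul_assoc matrix_mul_lid)
  show ?thesis
    by (simp add: TT_def op2_op1 op1_op1 op2_op2 m ZZi op1_id op2_id)
qed

lemma Alt3_bw3: "op1 (Z**Z) (op2 Z Alt3) = barwedge3 Z (e a) (e b) (e c)"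
  by (simp add: Alt3_def barwedge3_def op1_add op1_diff op2_add op2_diff op1_t3 op2_t3)

lemma op12_scale: "op1 A (op2 B (r *s t)) = r *s op1 A (op2 B t)"
  by (simp add: op1_scale op2_scale)

lemma Ups_rep: "t \<in> Upsilon3 Z \<Longrightarrow> \<exists>r. t = r *s barwedge3 Z (e a) (e b) (e c)"
proof -
  assume "t \<in> Upsilon3 Z"
  then have "alt12 (TT t)" "alt23 (TT t)" unfolding Upsilon3_def using alt12_I2V alt23_VI2 by auto
  then have "TT t = (TT t)$(a,b,c) *s Alt3" by (rule alt_rep)
  then have "op1 (Z**Z) (op2 Z (TT t)) = (TT t)$(a,b,c) *s op1 (Z**Z) (op2 Z Alt3)"
    by (metis op12_scale)
  then show ?thesis by (auto simp: TT_inv Alt3_bw3)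
qed

lemma Phi_Ups: "t \<in> Upsilon3 Z \<Longrightarrow> Phi x y t = 0"
  using Ups_rep Phi_scale Phi_bw3 by (metis mult_zero_right)

end

lemma tensor2_add1: "tensor2 (p + p') r = tensor2 p r + tensor2 p' r" by (simp add: vec_eq_iff algebra_simps)

lemma matq_mv: "(mat q - R) *v t = q *s t - R *v (t::'k::field^'m::finite)"
  by (simp add: vec_eq_iff matrix_vector_mult_def mat_def algebra_simps sum_subtractf if_distrib[where f="\<lambda>z. z * _"] cong: if_cong)

context S3 begin

lemma K_bw2: "kron Zi Zi *v barwedge2 Z p r = barwedge2 Z (Zi *v p) (Zi *v r)"
  by (simp add: barwedge2_def matrix_vector_mult_diff_distrib kron_tensor2)

lemma K_I2: "m \<in> I2 Z \<Longrightarrow> kron Zi Zi *v m \<in> I2 Z"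
  unfolding I2_def
proof (induction rule: vec.span_induct_alt)
  case base then show ?case by (simp add: vec.span_zero)
next
  case (step r x y)
  then obtain p q where x: "x = barwedge2 Z p q" by auto
  have "kron Zi Zi *v x \<in> vec.span {barwedge2 Z x y |x y. True}"
    unfolding x K_bw2 by (rule vec.span_base) auto
  then show ?case using step
    by (simp add: matrix_vector_right_distrib vector_scalar_commute vec.span_add vec.span_scale)
qed

lemma KK': "kron Zi Zi *v (kron Z Z *v t) = t"
  by (simp add: kron_kron ZiZ kron_id)

lemma gen_P:
  assumes m: "m \<in> I2 Z"
    and Badd: "\<And>u v. B (u + v) = B u + B v" and Bsc: "\<And>r u. B (r *s u) = r * B u"
  shows "(\<Sum>i\<in>UNIV. \<omega> x y ((Zi**Zi) *v e i) * B (rowv m i))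
       = lam y (kron Zi Zi *v m) * B (Z *v x) - lam x (kron Zi Zi *v m) * B (Z *v y)"
  using m unfolding I2_def
proof (induction rule: vec.span_induct_alt)
  case base
  have "B 0 = 0" using Bsc[of 0 0] by simp
  then show ?case by (simp add: lam_zero)
next
  case (step r g m')
  then obtain p q where g: "g = barwedge2 Z p q" by auto
  have Bd: "B (u - v) = B u - B v" for u v using Badd[of "u - v" v] by simp
  have rg: "rowv g i = (Z *v p)$i *s q - (Z *v q)$i *s p" for i
    by (simp add: g barwedge2_def rowv_tensor2)
  have "(\<Sum>i\<in>UNIV. \<omega> x y ((Zi**Zi) *v e i) * B (rowv g i))
      = (\<Sum>i\<in>UNIV. \<omega> x y ((Zi**Zi) *v e i) * (Z *v p)$i) * B q - (\<Sum>i\<in>UNIV. \<omega> x y ((Zi**Zi) *v e i) * (Z *v q)$i) * B p"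
    by (simp add: rg Bd Bsc sum_distrib_right sum_distrib_left sum_subtractf algebra_simps)
  also have "\<dots> = \<omega> x y (Zi *v p) * B q - \<omega> x y (Zi *v q) * B p"
    by (simp add: gsum Zi2Z)
  also have "\<dots> = lam y (kron Zi Zi *v g) * B (Z *v x) - lam x (kron Zi Zi *v g) * B (Z *v y)"
  proof -
    define P where "P = Zi *v p"
    define Q where "Q = Zi *v q"
    have pP: "p = Z *v P" and qQ: "q = Z *v Q" by (simp_all add: P_def Q_def)
    have pl: "\<omega> y P Q *s x - \<omega> x P Q *s y + \<omega> x y Q *s P - \<omega> x y P *s Q = 0" by (rule pluecker)
    have "B (Z *v (\<omega> y P Q *s x - \<omega> x P Q *s y + \<omega> x y Q *s P - \<omega> x y P *s Q)) = 0"
      using Bsc[of 0 0] by (simp add: pl)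
    then have "\<omega> y P Q * B (Z *v x) - \<omega> x P Q * B (Z *v y) + \<omega> x y Q * B (Z *v P) - \<omega> x y P * B (Z *v Q) = 0"
      by (simp add: matrix_vector_right_distrib matrix_vector_mult_diff_distrib vector_scalar_commute Badd Bd Bsc)
    then show ?thesis
      by (simp add: g K_bw2 lam_bw2 flip: P_def Q_def pP qQ) (simp add: algebra_simps)
  qed
  finally have gen: "(\<Sum>i\<in>UNIV. \<omega> x y ((Zi**Zi) *v e i) * B (rowv g i))
      = lam y (kron Zi Zi *v g) * B (Z *v x) - lam x (kron Zi Zi *v g) * B (Z *v y)" .
  have "(\<Sum>i\<in>UNIV. \<omega> x y ((Zi**Zi) *v e i) * B (rowv (r *s g + m') i))
     = r * (\<Sum>i\<in>UNIV. \<omega> x y ((Zi**Zi) *v e i) * B (rowv g i)) + (\<Sum>i\<in>UNIV. \<omega> x y ((Zi**Zi) *v e i) * B (rowv m' i))"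
    by (simp add: Badd Bsc sum_distrib_left sum.distrib algebra_simps)
  also have "\<dots> = lam y (kron Zi Zi *v (r *s g + m')) * B (Z *v x) - lam x (kron Zi Zi *v (r *s g + m')) * B (Z *v y)"
    by (simp only: gen step.IH) (simp add: matrix_vector_right_distrib vector_scalar_commute lam_add lam_scale algebra_simps)
  finally show ?case .
qed

end

context S3 begin

lemma main:
  fixes R :: "'k^('n\<times>'n)^('n\<times>'n)" and q :: 'k and x y :: "'k^'n"
  assumes SVR: "range (\<lambda>w. (R - mat q) *v w) = I2 Z"
    and hyp: "\<forall>w \<in> V_tensor_I2 Z.
       lift23 (mat q - R) *v (lift12 (mat q - R) *v w) - q *s w \<in> Upsilon3 Z"
  shows "wedge_forms (ell Z \<omega> (mat q - R) x y) (ell Z \<omega> (mat q - kron Zi Zi ** R ** kron Z Z) x y)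
       = wedge_forms (ell Z \<omega> (mat q - R) x x) (ell Z \<omega> (mat q - kron Zi Zi ** R ** kron Z Z) y y)"
proof -
  define Y where "Y = mat q - R"
  define K where "K = kron Zi Zi"
  define K' where "K' = (kron Z Z :: 'k^('n\<times>'n)^('n\<times>'n))"
  have Y_I2: "Y *v t \<in> I2 Z" for t
  proof -
    have "(R - mat q) *v t \<in> I2 Z" using SVR by blast
    then have "- ((R - mat q) *v t) \<in> I2 Z" unfolding I2_def by (rule vec.span_neg)
    then show ?thesis by (simp add: Y_def mat_neg_mv)
  qed
  have Y'eq: "(mat q - K ** R ** K') *v t = K *v (Y *v (K' *v t))" for t
  proof -
    have "(mat q - K ** R ** K') *v t = q *s t - K *v (R *v (K' *v t))"
      by (simp add: matq_mv matrix_vector_mul_assoc matrix_mul_assoc)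
    also have "\<dots> = K *v (Y *v (K' *v t))"
      by (simp add: Y_def matq_mv matrix_vector_mult_diff_distrib vector_scalar_commute K_def K'_def KK')
    finally show ?thesis .
  qed
  have ellY: "ell Z \<omega> Y x' y' z = lam x' (Y *v tensor2 (Z *v y') z)" for x' y' z
    by (rule ell_eq[OF Y_I2])
  have ellY': "ell Z \<omega> (mat q - K ** R ** K') x' y' z = lam x' (K *v (Y *v tensor2 (Z *v (Z *v y')) (Z *v z)))" for x' y' z
  proof -
    have "(mat q - K ** R ** K') *v tensor2 (Z *v y') z \<in> I2 Z"
      unfolding Y'eq unfolding K_def by (rule K_I2[OF Y_I2])
    then have "ell Z \<omega> (mat q - K ** R ** K') x' y' z = lam x' ((mat q - K ** R ** K') *v tensor2 (Z *v y') z)"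
      by (rule ell_eq)
    also have "\<dots> = lam x' (K *v (Y *v tensor2 (Z *v (Z *v y')) (Z *v z)))"
      by (simp only: Y'eq) (simp add: K'_def kron_tensor2)
    finally show ?thesis .
  qed
  define B where "B s d = lam x (Y *v tensor2 d s)" for s d
  have Badd: "B s (d + d') = B s d + B s d'" for s d d'
    by (simp add: B_def tensor2_add1 matrix_vector_right_distrib lam_add)
  have Bsc: "B s (r *s d) = r * B s d" for s r d
    by (simp add: B_def tensor2_scale1 vector_scalar_commute lam_scale)
  have PhiE: "Phi x y (lift23 Y *v tensor21 m s) = lam y (K *v m) * B s (Z *v x) - lam x (K *v m) * B s (Z *v y)"
    if "m \<in> I2 Z" for m s
  proof -
    have "Phi x y (lift23 Y *v tensor21 m s) = (\<Sum>i\<in>UNIV. \<omega> x y ((Zi**Zi) *v e i) * B s (rowv m i))"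
      by (simp add: Phi_def slice_lift23 slice_tensor21 B_def)
    also have "\<dots> = lam y (K *v m) * B s (Z *v x) - lam x (K *v m) * B s (Z *v y)"
      unfolding K_def by (rule gen_P[OF that Badd Bsc])
    finally show ?thesis .
  qed
  have key: "wedge_forms (ell Z \<omega> Y x y) (ell Z \<omega> (mat q - K ** R ** K') x y) u v
       = wedge_forms (ell Z \<omega> Y x x) (ell Z \<omega> (mat q - K ** R ** K') y y) u v" for u v
  proof -
    define n1 where "n1 = tensor2 (Z *v (Z *v y)) (Z *v v)"
    define n2 where "n2 = tensor2 (Z *v (Z *v y)) (Z *v u)"
    define w where "w = tensor12 (Z *v (Z *v y)) (barwedge2 Z v u)"
    have wV: "w \<in> V_tensor_I2 Z"
      unfolding V_tensor_I2_def w_def by (rule vec.span_base) (blast intro: bw2_in_I2)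
    have H: "lift23 Y *v (lift12 Y *v w) - q *s w \<in> Upsilon3 Z"
      using hyp wV by (simp add: Y_def)
    have Phi0: "Phi x y w = 0"
      by (simp add: w_def Phi_tensor12 Zi2Z)
    have we: "w = tensor21 n1 u - tensor21 n2 v"
      by (simp add: w_def n1_def n2_def barwedge2_def tensor12_diff tensor12_tensor2 tensor21_tensor2)
    have e1: "lift12 Y *v w = tensor21 (Y *v n1) u - tensor21 (Y *v n2) v"
      by (simp add: we matrix_vector_mult_diff_distrib lift12_tensor21)
    have "0 = Phi x y (lift23 Y *v (lift12 Y *v w) - q *s w)"
      using Phi_Ups[OF H] by simp
    also have "\<dots> = Phi x y (lift23 Y *v tensor21 (Y *v n1) u) - Phi x y (lift23 Y *v tensor21 (Y *v n2) v)"
      by (simp add: Phi_diff Phi_scale Phi0 e1 matrix_vector_mult_diff_distrib)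
    also have "\<dots> = (lam y (K *v (Y *v n1)) * B u (Z *v x) - lam x (K *v (Y *v n1)) * B u (Z *v y))
                   - (lam y (K *v (Y *v n2)) * B v (Z *v x) - lam x (K *v (Y *v n2)) * B v (Z *v y))"
      by (simp add: PhiE Y_I2)
    also have "\<dots> = (ell Z \<omega> (mat q - K ** R ** K') y y v * ell Z \<omega> Y x x u - ell Z \<omega> (mat q - K ** R ** K') x y v * ell Z \<omega> Y x y u)
                   - (ell Z \<omega> (mat q - K ** R ** K') y y u * ell Z \<omega> Y x x v - ell Z \<omega> (mat q - K ** R ** K') x y u * ell Z \<omega> Y x y v)"
      by (simp add: ellY ellY' B_def n1_def n2_def)
    finally show ?thesis
      by (simp add: wedge_forms_def algebra_simps)
  qed
  show ?thesis
    using key unfolding Y_def K_def K'_def by (intro ext) simp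
qed

end

theorem lemma2p1:
  fixes Z :: "'k::field^'n::finite^'n"
    and R :: "'k^('n\<times>'n)^('n\<times>'n)"
    and q :: 'k
    and \<omega> :: "'k^'n \<Rightarrow> 'k^'n \<Rightarrow> 'k^'n \<Rightarrow> 'k"
    and x y :: "'k^'n"
  assumes dim3: "CARD('n) = 3"
    and Z_inv: "invertible Z"
    and q_nz: "q \<noteq> 0"
    and braid: "lift12 R ** lift23 R ** lift12 R = lift23 R ** lift12 R ** lift23 R"
    and hecke: "(R - mat q) ** (R + mat 1) = 0"
    and SVR: "range (\<lambda>w. (R - mat q) *v w) = I2 Z"
    and \<omega>_alt: "alternating3 \<omega>"
    and \<omega>_nz: "\<exists>a b c. \<omega> a b c \<noteq> 0"
    and hyp: "\<forall>w \<in> V_tensor_I2 Z.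
       lift23 (mat q - R) *v (lift12 (mat q - R) *v w) - q *s w \<in> Upsilon3 Z"
  shows "wedge_forms (ell Z \<omega> (mat q - R) x y)
           (ell Z \<omega> (mat q - kron (matrix_inv Z) (matrix_inv Z) ** R ** kron Z Z) x y)
       = wedge_forms (ell Z \<omega> (mat q - R) x x)
           (ell Z \<omega> (mat q - kron (matrix_inv Z) (matrix_inv Z) ** R ** kron Z Z) y y)"
proof -
  have inv: "Z ** matrix_inv Z = mat 1 \<and> matrix_inv Z ** Z = mat 1"
    using Z_inv unfolding invertible_def matrix_inv_def by (rule someI_ex)
  have "card (UNIV::'n set) = 3" using dim3 by simp
  then obtain a b c where abc: "(UNIV::'n set) = {a,b,c}" "a \<noteq> b" "b \<noteq> c" "a \<noteq> c"
    unfolding card_3_iff by blast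
  interpret S3 Z "matrix_inv Z" \<omega> a b c
    using inv abc \<omega>_alt by unfold_locales auto
  show ?thesis using main[OF SVR hyp] .
qed

end
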